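(* Let $N_1,\dots,N_R$ be produced by the tree-based resampling algorithm described in the context with probabilities $\pi_1,\dots,\pi_R$ and $N$ particles. Then for every $\varepsilon>0$, $$\sup_{A\subset\{1,\dots,R\}}\mathbf P\Big[\Big|\sum_{j\in A}(N_j-N\pi_j)\Big|\ge\varepsilon\Big]\le2\exp(-4\varepsilon^2/R).$$
   Context: Tree-based resampling: given probabilities $\pi_1,\dots,\pi_R$ and $N\in\mathbb N$, fix an arbitrary binary tree with $R$ leaves labelled $1,\dots,R$; identify each node $\alpha$ with the set of leaves below it and put $\mu_\alpha=N\sum_{j\in\alpha}\pi_j$. $N$ particles start at the root and are propagated down: for each node $\alpha$ the number $N_\alpha$ of particles passing through $\alpha$ satisfies $N_\alpha\in\{\lfloor\mu_\alpha\rfloor,\lfloor\mu_\alpha\rfloor+1\}$ and $\mathbf E[N_\alpha]=\mu_\alpha$; at each internal node the split of the arriving particles between its two children is either deterministic or a random choice between two possibilities with given probabilities, and the random choices at different nodes are made independently. $N_j$ is the number of particles ending at leaf $j$. *)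

theory Defs
  imports "HOL-Probability.Probability"
begin

text \<open>A full binary tree whose leaves carry labels and whose internal nodes carry
  the splitting rule: given the number n of particles arriving at the node,
  a (random) number of particles sent to the left child; the rest go right.\<close>
datatype rtree = Leaf nat | Node "nat \<Rightarrow> nat pmf" rtree rtree

fun leaves :: "rtree \<Rightarrow> nat list" where
  "leaves (Leaf j) = [j]"
| "leaves (Node f l r) = leaves l @ leaves r"

fun subtrees :: "rtree \<Rightarrow> rtree set" where
  "subtrees (Leaf j) = {Leaf j}"
| "subtrees (Node f l r) = insert (Node f l r) (subtrees l \<union> subtrees r)"

fun resample :: "rtree \<Rightarrow> nat \<Rightarrow> (nat \<Rightarrow> nat) pmf" where
  "resample (Leaf j) n = return_pmf (\<lambda>i. if i = j then n else 0)"
| "resample (Node f l r) n =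
     do { k \<leftarrow> f n; a \<leftarrow> resample l k; b \<leftarrow> resample r (n - k);
          return_pmf (\<lambda>i. a i + b i) }"

definition mu :: "nat \<Rightarrow> (nat \<Rightarrow> real) \<Rightarrow> rtree \<Rightarrow> real" where
  "mu N p s = real N * (\<Sum>j\<in>set (leaves s). p j)"

end

theory Submission
  imports Defs
begin

lemma resample_zero:
  "Nv \<in> set_pmf (resample s n) \<Longrightarrow> j \<notin> set (leaves s) \<Longrightarrow> Nv j = 0"
proof (induction s arbitrary: n Nv)
  case (Leaf x)
  then show ?case by auto
next
  case (Node f l r)
  from Node.prems obtain k a b where "a \<in> set_pmf (resample l k)" "b \<in> set_pmf (resample r (n-k))"
    "Nv = (\<lambda>i. a i + b i)" by (auto simp: set_bind_pmf)
  then show ?case using Node by auto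
qed

lemma leaves_subtrees: "s' \<in> subtrees s \<Longrightarrow> set (leaves s') \<subseteq> set (leaves s)"
  by (induction s) auto

lemma self_subtrees: "s \<in> subtrees s"
  by (cases s) auto

lemma subtrees_trans: "s' \<in> subtrees s \<Longrightarrow> subtrees s' \<subseteq> subtrees s"
  by (induction s) auto

lemma leaf_subtrees: "j \<in> set (leaves s) \<Longrightarrow> Leaf j \<in> subtrees s"
  by (induction s) auto

lemma sum_split:
  assumes "distinct (leaves l @ leaves r)" "\<forall>j. j \<notin> set (leaves l) \<longrightarrow> a j = 0"
    "\<forall>j. j \<notin> set (leaves r) \<longrightarrow> b j = 0"
  shows "(\<Sum>j\<in>set (leaves l) \<union> set (leaves r). a j + b j) =
     (\<Sum>j\<in>set (leaves l). a j) + (\<Sum>j\<in>set (leaves r). (b j::nat))"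
proof -
  have d: "set (leaves l) \<inter> set (leaves r) = {}" using assms(1) by auto
  have "(\<Sum>j\<in>set (leaves l) \<union> set (leaves r). a j + b j) =
     (\<Sum>j\<in>set (leaves l). a j + b j) + (\<Sum>j\<in>set (leaves r). a j + b j)"
    using d by (simp add: sum.union_disjoint)
  also have "(\<Sum>j\<in>set (leaves l). a j + b j) = (\<Sum>j\<in>set (leaves l). a j)"
    using d assms(3) by (intro sum.cong) auto
  also have "(\<Sum>j\<in>set (leaves r). a j + b j) = (\<Sum>j\<in>set (leaves r). b j)"
    using d assms(2) by (intro sum.cong) auto
  finally show ?thesis .
qed

lemma resample_ge:
  "distinct (leaves s) \<Longrightarrow> Nv \<in> set_pmf (resample s n) \<Longrightarrow> n \<le> (\<Sum>j\<in>set (leaves s). Nv j)"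
proof (induction s arbitrary: n Nv)
  case (Leaf x)
  then show ?case by auto
next
  case (Node f l r)
  from Node.prems obtain k a b where ab: "a \<in> set_pmf (resample l k)" "b \<in> set_pmf (resample r (n-k))"
    "Nv = (\<lambda>i. a i + b i)" by (auto simp: set_bind_pmf)
  have "(\<Sum>j\<in>set (leaves (Node f l r)). Nv j) = (\<Sum>j\<in>set (leaves l). a j) + (\<Sum>j\<in>set (leaves r). b j)"
    using ab Node.prems(1) by (simp add: sum_split resample_zero)
  moreover have "k \<le> (\<Sum>j\<in>set (leaves l). a j)" using Node ab by simp
  moreover have "n - k \<le> (\<Sum>j\<in>set (leaves r). b j)" using Node ab by simp
  ultimately show ?case by linarith
qed

definition fl :: "nat \<Rightarrow> (nat \<Rightarrow> real) \<Rightarrow> rtree \<Rightarrow> nat" where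
  "fl N p s = nat \<lfloor>mu N p s\<rfloor>"

fun ok :: "nat \<Rightarrow> (nat \<Rightarrow> real) \<Rightarrow> rtree \<Rightarrow> nat \<Rightarrow> bool" where
  "ok N p (Leaf j) n = (n = fl N p (Leaf j) \<or> n = fl N p (Leaf j) + 1)"
| "ok N p (Node f l r) n = ((n = fl N p (Node f l r) \<or> n = fl N p (Node f l r) + 1) \<and>
     (\<forall>k\<in>set_pmf (f n). k \<le> n \<and> ok N p l k \<and> ok N p r (n - k)))"

lemma ok_range: "ok N p s n \<Longrightarrow> n = fl N p s \<or> n = fl N p s + 1"
  by (cases s) auto

lemma derive_ok:
  assumes "distinct (leaves s)"
    and "\<forall>Nv\<in>set_pmf (resample s n). (\<Sum>j\<in>set (leaves s). Nv j) = n"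
    and "\<forall>Nv\<in>set_pmf (resample s n). \<forall>s'\<in>subtrees s.
           (\<Sum>j\<in>set (leaves s'). Nv j) = fl N p s' \<or> (\<Sum>j\<in>set (leaves s'). Nv j) = fl N p s' + 1"
  shows "ok N p s n"
  using assms
proof (induction s arbitrary: n)
  case (Leaf x)
  obtain Nv where "Nv \<in> set_pmf (resample (Leaf x) n)" by (meson ex_in_conv set_pmf_not_empty)
  then show ?case using Leaf.prems self_subtrees[of "Leaf x"] by fastforce
next
  case (Node f l r)
  let ?s = "Node f l r"
  have dl: "distinct (leaves l)" and dr: "distinct (leaves r)" using Node.prems(1) by auto
  obtain Nv where Nv: "Nv \<in> set_pmf (resample ?s n)" by (meson ex_in_conv set_pmf_not_empty)
  have rng: "n = fl N p ?s \<or> n = fl N p ?s + 1"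
    using Node.prems(2,3) Nv self_subtrees[of ?s] by metis
  have key: "k \<le> n \<and> (\<forall>a\<in>set_pmf (resample l k). (\<Sum>j\<in>set (leaves l). a j) = k \<and>
      (\<forall>s'\<in>subtrees l. (\<Sum>j\<in>set (leaves s'). a j) = fl N p s' \<or> (\<Sum>j\<in>set (leaves s'). a j) = fl N p s' + 1))
    \<and> (\<forall>b\<in>set_pmf (resample r (n-k)). (\<Sum>j\<in>set (leaves r). b j) = n-k \<and>
      (\<forall>s'\<in>subtrees r. (\<Sum>j\<in>set (leaves s'). b j) = fl N p s' \<or> (\<Sum>j\<in>set (leaves s'). b j) = fl N p s' + 1))"
    if k: "k \<in> set_pmf (f n)" for k
  proof -
    obtain a0 where a0: "a0 \<in> set_pmf (resample l k)" by (meson ex_in_conv set_pmf_not_empty)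
    obtain b0 where b0: "b0 \<in> set_pmf (resample r (n-k))" by (meson ex_in_conv set_pmf_not_empty)
    have mem: "(\<lambda>i. a i + b i) \<in> set_pmf (resample ?s n)"
      if "a \<in> set_pmf (resample l k)" "b \<in> set_pmf (resample r (n-k))" for a b
      using that k by (auto simp: set_bind_pmf)
    have sumeq: "(\<Sum>j\<in>set (leaves l). a j) + (\<Sum>j\<in>set (leaves r). b j) = n"
      if "a \<in> set_pmf (resample l k)" "b \<in> set_pmf (resample r (n-k))" for a b
    proof -
      have "(\<Sum>j\<in>set (leaves ?s). (\<lambda>i. a i + b i) j) = n" using Node.prems(2) mem[OF that] by blast
      then show ?thesis using that Node.prems(1) by (simp add: sum_split resample_zero)
    qed
    have gel: "k \<le> (\<Sum>j\<in>set (leaves l). a j)" if "a \<in> set_pmf (resample l k)" for a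
      using resample_ge[OF dl that] .
    have ger: "n - k \<le> (\<Sum>j\<in>set (leaves r). b j)" if "b \<in> set_pmf (resample r (n-k))" for b
      using resample_ge[OF dr that] .
    have kn: "k \<le> n" using sumeq[OF a0 b0] gel[OF a0] by linarith
    have restr: "(\<Sum>j\<in>set (leaves s'). a j + b j) = (\<Sum>j\<in>set (leaves s'). a j)"
      if "a \<in> set_pmf (resample l k)" "b \<in> set_pmf (resample r (n-k))" "s' \<in> subtrees l" for a b s'
    proof (intro sum.cong refl)
      fix j assume "j \<in> set (leaves s')"
      then have "j \<in> set (leaves l)" using leaves_subtrees[OF that(3)] by auto
      then have "j \<notin> set (leaves r)" using Node.prems(1) by auto
      then show "a j + b j = a j" using resample_zero[OF that(2)] by simp
    qed
    have restr2: "(\<Sum>j\<in>set (leaves s'). a j + b j) = (\<Sum>j\<in>set (leaves s'). b j)"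
      if "a \<in> set_pmf (resample l k)" "b \<in> set_pmf (resample r (n-k))" "s' \<in> subtrees r" for a b s'
    proof (intro sum.cong refl)
      fix j assume "j \<in> set (leaves s')"
      then have "j \<in> set (leaves r)" using leaves_subtrees[OF that(3)] by auto
      then have "j \<notin> set (leaves l)" using Node.prems(1) by auto
      then show "a j + b j = b j" using resample_zero[OF that(1)] by simp
    qed
    have subl: "subtrees l \<subseteq> subtrees ?s" and subr: "subtrees r \<subseteq> subtrees ?s" by auto
    show ?thesis
    proof (intro conjI ballI)
      show "k \<le> n" by fact
    next
      fix a assume a: "a \<in> set_pmf (resample l k)"
      show "(\<Sum>j\<in>set (leaves l). a j) = k" using sumeq[OF a b0] gel[OF a] ger[OF b0] kn by linarith
    next
      fix a s' assume a: "a \<in> set_pmf (resample l k)" and s': "s' \<in> subtrees l"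
      show "(\<Sum>j\<in>set (leaves s'). a j) = fl N p s' \<or> (\<Sum>j\<in>set (leaves s'). a j) = fl N p s' + 1"
        using Node.prems(3) mem[OF a b0] subl s' restr[OF a b0 s'] by (metis subsetD)
    next
      fix b assume b: "b \<in> set_pmf (resample r (n-k))"
      show "(\<Sum>j\<in>set (leaves r). b j) = n - k" using sumeq[OF a0 b] gel[OF a0] ger[OF b] kn by linarith
    next
      fix b s' assume b: "b \<in> set_pmf (resample r (n-k))" and s': "s' \<in> subtrees r"
      show "(\<Sum>j\<in>set (leaves s'). b j) = fl N p s' \<or> (\<Sum>j\<in>set (leaves s'). b j) = fl N p s' + 1"
        using Node.prems(3) mem[OF a0 b] subr s' restr2[OF a0 b s'] by (metis subsetD)
    qed
  qed
  show ?case
    using rng key Node.IH(1)[OF dl] Node.IH(2)[OF dr] by auto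
qed

abbreviation E :: "'a pmf \<Rightarrow> ('a \<Rightarrow> real) \<Rightarrow> real" where
  "E P h \<equiv> measure_pmf.expectation P h"

lemma E_cong: "(\<And>x. x \<in> set_pmf P \<Longrightarrow> f x = g x) \<Longrightarrow> E P f = E P g"
  by (rule integral_cong_AE) (auto simp: AE_measure_pmf_iff)

lemma exp_bind:
  assumes "finite (set_pmf P)" "\<And>x. x \<in> set_pmf P \<Longrightarrow> finite (set_pmf (Q x))"
  shows "E (P \<bind> Q) h = E P (\<lambda>x. E (Q x) h)"
proof -
  have "E (P \<bind> Q) h = (\<Sum>a\<in>set_pmf P. pmf P a *\<^sub>R E (Q a) h)"
    by (rule pmf_expectation_bind) (use assms in auto)
  also have "\<dots> = E P (\<lambda>x. E (Q x) h)"
    using integral_measure_pmf_real[OF assms(1), of P "\<lambda>x. E (Q x) h"] by (simp add: mult.commute)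
  finally show ?thesis .
qed

lemma fin: "ok N p s n \<Longrightarrow> finite (set_pmf (resample s n))"
proof (induction s arbitrary: n)
  case (Leaf x)
  then show ?case by simp
next
  case (Node f l r)
  have ff: "finite (set_pmf (f n))"
  proof (rule finite_subset[of _ "{..n}"])
    show "set_pmf (f n) \<subseteq> {..n}" using Node.prems by auto
  qed simp
  show ?case
    unfolding resample.simps set_bind_pmf comp_def set_return_pmf
  proof (rule finite_UN_I[OF ff])
    fix k assume k: "k \<in> set_pmf (f n)"
    have o: "ok N p l k" "ok N p r (n-k)" using Node.prems k by auto
    show "finite (\<Union>a\<in>set_pmf (resample l k). \<Union>b\<in>set_pmf (resample r (n-k)). {\<lambda>i. a i + b i})"
      by (intro finite_UN_I Node.IH(1)[OF o(1)] Node.IH(2)[OF o(2)] finite.intros)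
  qed
qed

definition G :: "real \<Rightarrow> nat set \<Rightarrow> rtree \<Rightarrow> nat \<Rightarrow> real" where
  "G lam B s n = E (resample s n) (\<lambda>Nv. exp (lam * (\<Sum>j\<in>B. real (Nv j))))"

definition Mf :: "nat set \<Rightarrow> rtree \<Rightarrow> nat \<Rightarrow> real" where
  "Mf B s n = E (resample s n) (\<lambda>Nv. (\<Sum>j\<in>B. real (Nv j)))"

lemma G_nonneg: "0 \<le> G lam B s n"
  unfolding G_def by (intro integral_nonneg_AE) auto

lemma sum_leaf: "finite B \<Longrightarrow> (\<Sum>i\<in>B. real (if i = j then n else 0)) = (if j \<in> B then real n else 0)"
proof -
  assume fB: "finite B"
  have "(\<Sum>i\<in>B. real (if i = j then n else 0)) = (\<Sum>i\<in>B. if i = j then real n else 0)"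
    by (rule sum.cong) auto
  also have "\<dots> = (if j \<in> B then real n else 0)" using fB by (rule sum.delta)
  finally show ?thesis .
qed

lemma G_leaf: "finite B \<Longrightarrow> G lam B (Leaf j) n = exp (lam * (if j \<in> B then real n else 0))"
  unfolding G_def resample.simps expectation_return_pmf by (rule arg_cong[where f=exp], subst sum_leaf) auto

lemma Mf_leaf: "finite B \<Longrightarrow> Mf B (Leaf j) n = (if j \<in> B then real n else 0)"
  unfolding Mf_def resample.simps expectation_return_pmf by (rule sum_leaf)

lemma fin_bind: "finite (set_pmf P) \<Longrightarrow> (\<And>x. x \<in> set_pmf P \<Longrightarrow> finite (set_pmf (Q x))) \<Longrightarrow>
  finite (set_pmf (P \<bind> Q))"
  unfolding set_bind_pmf comp_def by (rule finite_UN_I)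

lemma ok_ff: "ok N p (Node f l r) n \<Longrightarrow> finite (set_pmf (f n))"
proof (rule finite_subset[of _ "{..n}"])
  show "ok N p (Node f l r) n \<Longrightarrow> set_pmf (f n) \<subseteq> {..n}" by auto
qed simp

lemma node_bind:
  assumes "ok N p (Node f l r) n"
  shows "E (resample (Node f l r) n) h =
    E (f n) (\<lambda>k. E (resample l k) (\<lambda>a. E (resample r (n-k)) (\<lambda>b. h (\<lambda>i. a i + b i))))"
proof -
  have ff: "finite (set_pmf (f n))" using ok_ff[OF assms] .
  have okk: "ok N p l k" "ok N p r (n-k)" if "k \<in> set_pmf (f n)" for k using assms that by auto
  have fr: "finite (set_pmf (resample r (n - k) \<bind> (\<lambda>b. return_pmf (\<lambda>i. a i + b i))))"
    if "k \<in> set_pmf (f n)" for k a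
    by (rule fin_bind[OF fin[OF okk(2)[OF that]]]) simp
  have "E (resample (Node f l r) n) h = E (f n) (\<lambda>k. E (resample l k \<bind>
        (\<lambda>a. resample r (n - k) \<bind> (\<lambda>b. return_pmf (\<lambda>i. a i + b i)))) h)"
    unfolding resample.simps
  proof (rule exp_bind[OF ff])
    fix k assume k: "k \<in> set_pmf (f n)"
    show "finite (set_pmf (resample l k \<bind>
        (\<lambda>a. resample r (n - k) \<bind> (\<lambda>b. return_pmf (\<lambda>i. a i + b i)))))"
      by (rule fin_bind[OF fin[OF okk(1)[OF k]] fr[OF k]])
  qed
  also have "\<dots> = E (f n) (\<lambda>k. E (resample l k) (\<lambda>a. E (resample r (n - k) \<bind> (\<lambda>b. return_pmf (\<lambda>i. a i + b i))) h))"
  proof (rule E_cong)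
    fix k assume k: "k \<in> set_pmf (f n)"
    show "E (resample l k \<bind>
        (\<lambda>a. resample r (n - k) \<bind> (\<lambda>b. return_pmf (\<lambda>i. a i + b i)))) h =
      E (resample l k) (\<lambda>a. E (resample r (n - k) \<bind> (\<lambda>b. return_pmf (\<lambda>i. a i + b i))) h)"
      by (rule exp_bind[OF fin[OF okk(1)[OF k]] fr[OF k]])
  qed
  also have "\<dots> = E (f n) (\<lambda>k. E (resample l k) (\<lambda>a. E (resample r (n-k)) (\<lambda>b. h (\<lambda>i. a i + b i))))"
  proof (rule E_cong, rule E_cong)
    fix k a assume k: "k \<in> set_pmf (f n)"
    have "E (resample r (n - k) \<bind> (\<lambda>b. return_pmf (\<lambda>i. a i + b i))) h =
          E (resample r (n-k)) (\<lambda>b. E (return_pmf (\<lambda>i. a i + b i)) h)"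
      by (rule exp_bind[OF fin[OF okk(2)[OF k]]]) simp
    then show "E (resample r (n - k) \<bind> (\<lambda>b. return_pmf (\<lambda>i. a i + b i))) h =
          E (resample r (n-k)) (\<lambda>b. h (\<lambda>i. a i + b i))"
      by (simp only: expectation_return_pmf)
  qed
  finally show ?thesis .
qed

lemma G_node:
  assumes "ok N p (Node f l r) n"
  shows "G lam B (Node f l r) n = E (f n) (\<lambda>k. G lam B l k * G lam B r (n-k))"
  unfolding G_def node_bind[OF assms]
  by (simp add: sum.distrib distrib_left exp_add)

lemma Mf_node:
  assumes "ok N p (Node f l r) n"
  shows "Mf B (Node f l r) n = E (f n) (\<lambda>k. Mf B l k + Mf B r (n-k))"
  unfolding Mf_def node_bind[OF assms]
proof (rule E_cong)
  fix k assume k: "k \<in> set_pmf (f n)"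
  have okk: "ok N p l k" "ok N p r (n-k)" using assms k by auto
  let ?C = "E (resample r (n - k)) (\<lambda>b. (\<Sum>j\<in>B. real (b j)))"
  have "E (resample r (n - k)) (\<lambda>b. \<Sum>j\<in>B. real (a j + b j)) = (\<Sum>j\<in>B. real (a j)) + ?C" for a
  proof -
    have "E (resample r (n - k)) (\<lambda>b. \<Sum>j\<in>B. real (a j + b j)) =
        E (resample r (n - k)) (\<lambda>b. (\<Sum>j\<in>B. real (a j)) + (\<Sum>j\<in>B. real (b j)))"
      by (simp add: sum.distrib)
    also have "\<dots> = E (resample r (n - k)) (\<lambda>b. (\<Sum>j\<in>B. real (a j))) + ?C"
      by (rule Bochner_Integration.integral_add[OF integrable_measure_pmf_finite[OF fin[OF okk(2)]]
          integrable_measure_pmf_finite[OF fin[OF okk(2)]]])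
    also have "\<dots> = (\<Sum>j\<in>B. real (a j)) + ?C" by simp
    finally show ?thesis .
  qed
  then have "E (resample l k) (\<lambda>a. E (resample r (n - k)) (\<lambda>b. \<Sum>j\<in>B. real (a j + b j))) =
     E (resample l k) (\<lambda>a. (\<Sum>j\<in>B. real (a j)) + ?C)" by simp
  also have "\<dots> = E (resample l k) (\<lambda>Nv. \<Sum>j\<in>B. real (Nv j)) + E (resample l k) (\<lambda>_. ?C)"
    by (rule Bochner_Integration.integral_add[OF integrable_measure_pmf_finite[OF fin[OF okk(1)]]
          integrable_measure_pmf_finite[OF fin[OF okk(1)]]])
  also have "\<dots> = E (resample l k) (\<lambda>Nv. \<Sum>j\<in>B. real (Nv j)) + ?C" by simp
  finally show "E (resample l k) (\<lambda>a. E (resample r (n - k)) (\<lambda>b. \<Sum>j\<in>B. real (a j + b j))) =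
     E (resample l k) (\<lambda>Nv. \<Sum>j\<in>B. real (Nv j)) + ?C" .
qed

lemma E_comp:
  assumes "finite (set_pmf P)" "finite (set_pmf Q)"
    and "\<And>a b. a \<in> set_pmf P \<Longrightarrow> b \<in> set_pmf Q \<Longrightarrow> u a \<le> v b"
  shows "E P u \<le> E Q v"
proof -
  have "E P u \<le> v b" if "b \<in> set_pmf Q" for b
    using assms(1) assms(3)[OF _ that]
    by (intro measure_pmf.integral_le_const integrable_measure_pmf_finite AE_pmfI) auto
  then show ?thesis
    using assms(2)
    by (intro measure_pmf.integral_ge_const integrable_measure_pmf_finite AE_pmfI) auto
qed

lemma cov4:
  fixes J :: "(nat \<times> nat) pmf" and g h :: "nat \<Rightarrow> real"
  assumes supp: "\<And>a b. (a,b) \<in> set_pmf J \<Longrightarrow>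
      (a = x0 \<or> a = Suc x0) \<and> (b = y0 \<or> b = Suc y0) \<and> (a + b = z \<or> a + b = Suc z)"
    and mono: "(Suc x0, y0) \<in> set_pmf J \<Longrightarrow> (x0, Suc y0) \<in> set_pmf J \<Longrightarrow>
      0 \<le> (g (Suc x0) - g x0) * (h (Suc y0) - h y0)"
  shows "E J (\<lambda>q. g (fst q) * h (snd q)) \<le> E J (\<lambda>q. g (fst q)) * E J (\<lambda>q. h (snd q))"
proof -
  define S where "S = {(x0,y0),(x0,Suc y0),(Suc x0,y0),(Suc x0,Suc y0)}"
  have finS: "finite S" by (simp add: S_def)
  have sub: "set_pmf J \<subseteq> S"
  proof
    fix q assume "q \<in> set_pmf J"
    then show "q \<in> S" using supp[of "fst q" "snd q"] by (cases q) (auto simp: S_def)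
  qed
  define P00 where "P00 = pmf J (x0,y0)"
  define P01 where "P01 = pmf J (x0,Suc y0)"
  define P10 where "P10 = pmf J (Suc x0,y0)"
  define P11 where "P11 = pmf J (Suc x0,Suc y0)"
  have ex: "E J u = u (x0,y0) * P00 + u (x0,Suc y0) * P01 + u (Suc x0,y0) * P10 + u (Suc x0,Suc y0) * P11"
    for u :: "nat \<times> nat \<Rightarrow> real"
    using sub by (subst integral_measure_pmf_real[OF finS]) (auto simp: S_def P00_def P01_def P10_def P11_def)
  have s1: "P00 + P01 + P10 + P11 = 1"
    using sum_pmf_eq_1[OF finS sub] by (simp add: S_def P00_def P01_def P10_def P11_def)
  have z: "P00 * P11 = 0"
  proof (rule ccontr)
    assume "P00 * P11 \<noteq> 0"
    then have "(x0,y0) \<in> set_pmf J" "(Suc x0, Suc y0) \<in> set_pmf J"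
      by (auto simp: P00_def P11_def set_pmf_iff)
    from supp[OF this(1)] supp[OF this(2)] show False by auto
  qed
  have nn: "P00 \<ge> 0" "P01 \<ge> 0" "P10 \<ge> 0" "P11 \<ge> 0" by (simp_all add: P00_def P01_def P10_def P11_def)
  define g0 where "g0 = g x0"
  define g1 where "g1 = g (Suc x0)"
  define h0 where "h0 = h y0"
  define h1 where "h1 = h (Suc y0)"
  have D: "P10 * P01 \<noteq> 0 \<Longrightarrow> 0 \<le> (g1 - g0) * (h1 - h0)"
    using mono by (auto simp: P10_def P01_def set_pmf_iff g0_def g1_def h0_def h1_def)
  have P00: "P00 = 1 - P01 - P10 - P11" using s1 by simp
  have iden: "(g0*h0*P00 + g0*h1*P01 + g1*h0*P10 + g1*h1*P11) -
      (g0*P00 + g0*P01 + g1*P10 + g1*P11) * (h0*P00 + h1*P01 + h0*P10 + h1*P11)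
      = (g1 - g0) * (h1 - h0) * (P00 * P11 - P10 * P01)"
    unfolding P00 by (simp add: algebra_simps)
  have "(g1 - g0) * (h1 - h0) * (P00 * P11 - P10 * P01) \<le> 0"
  proof (cases "P10 * P01 = 0")
    case True
    then have "P00 * P11 - P10 * P01 = 0" using z by auto
    then show ?thesis by simp
  next
    case False
    then have "0 \<le> (g1 - g0) * (h1 - h0) * (P10 * P01)" using D nn by simp
    moreover have "(g1 - g0) * (h1 - h0) * (P00 * P11 - P10 * P01) = - ((g1 - g0) * (h1 - h0) * (P10 * P01))"
    proof -
      have zz: "P00 * P11 - P10 * P01 = - (P10 * P01)" using z by linarith
      show ?thesis unfolding zz by simp
    qed
    ultimately show ?thesis by linarith
  qed
  then show ?thesis
    using iden unfolding ex by (simp add: g0_def g1_def h0_def h1_def algebra_simps)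
qed

lemma G_mono:
  assumes "finite B"
  shows "ok N p s x \<Longrightarrow> ok N p s y \<Longrightarrow> x \<le> y \<Longrightarrow>
    (0 \<le> lam \<longrightarrow> G lam B s x \<le> G lam B s y) \<and> (lam \<le> 0 \<longrightarrow> G lam B s y \<le> G lam B s x)"
proof (induction s arbitrary: x y)
  case (Leaf j)
  have "0 \<le> lam \<Longrightarrow> lam * real x \<le> lam * real y" using Leaf.prems(3) by (simp add: mult_left_mono)
  moreover have "lam \<le> 0 \<Longrightarrow> lam * real y \<le> lam * real x" using Leaf.prems(3) by (simp add: mult_left_mono_neg)
  ultimately show ?case using assms by (simp add: G_leaf)
next
  case (Node f l r)
  show ?case
  proof (cases "x = y")
    case True then show ?thesis by simp
  next
    case False
    have rx: "x = fl N p (Node f l r) \<or> x = fl N p (Node f l r) + 1" using ok_range[OF Node.prems(1)] .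
    have ry: "y = fl N p (Node f l r) \<or> y = fl N p (Node f l r) + 1" using ok_range[OF Node.prems(2)] .
    have yx: "y = Suc x" using rx ry False Node.prems(3) by auto
    have ffx: "finite (set_pmf (f x))" using ok_ff[OF Node.prems(1)] .
    have ffy: "finite (set_pmf (f y))" using ok_ff[OF Node.prems(2)] .
    have pt: "(0 \<le> lam \<longrightarrow> G lam B l k * G lam B r (x-k) \<le> G lam B l k' * G lam B r (y-k')) \<and>
              (lam \<le> 0 \<longrightarrow> G lam B l k' * G lam B r (y-k') \<le> G lam B l k * G lam B r (x-k))"
      if k: "k \<in> set_pmf (f x)" and k': "k' \<in> set_pmf (f y)" for k k'
    proof -
      have o: "ok N p l k" "ok N p r (x-k)" "k \<le> x" using Node.prems(1) k by auto
      have o': "ok N p l k'" "ok N p r (y-k')" "k' \<le> y" using Node.prems(2) k' by auto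
      have "k \<le> k' \<and> x - k \<le> y - k'"
        using ok_range[OF o(1)] ok_range[OF o(2)] ok_range[OF o'(1)] ok_range[OF o'(2)] o(3) o'(3) yx
        by linarith
      then have il: "(0 \<le> lam \<longrightarrow> G lam B l k \<le> G lam B l k') \<and> (lam \<le> 0 \<longrightarrow> G lam B l k' \<le> G lam B l k)"
        and ir: "(0 \<le> lam \<longrightarrow> G lam B r (x-k) \<le> G lam B r (y-k')) \<and> (lam \<le> 0 \<longrightarrow> G lam B r (y-k') \<le> G lam B r (x-k))"
        using Node.IH(1)[OF o(1) o'(1)] Node.IH(2)[OF o(2) o'(2)] by auto
      show ?thesis
      proof (intro conjI impI)
        assume "0 \<le> lam"
        then show "G lam B l k * G lam B r (x-k) \<le> G lam B l k' * G lam B r (y-k')"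
          using il ir by (intro mult_mono G_nonneg) auto
      next
        assume "lam \<le> 0"
        then show "G lam B l k' * G lam B r (y-k') \<le> G lam B l k * G lam B r (x-k)"
          using il ir by (intro mult_mono G_nonneg) auto
      qed
    qed
    show ?thesis
      unfolding G_node[OF Node.prems(1)] G_node[OF Node.prems(2)]
    proof (intro conjI impI)
      assume "0 \<le> lam"
      then show "E (f x) (\<lambda>k. G lam B l k * G lam B r (x - k)) \<le> E (f y) (\<lambda>k. G lam B l k * G lam B r (y - k))"
        using pt by (intro E_comp[OF ffx ffy]) blast
    next
      assume "lam \<le> 0"
      then show "E (f y) (\<lambda>k. G lam B l k * G lam B r (y - k)) \<le> E (f x) (\<lambda>k. G lam B l k * G lam B r (x - k))"
        using pt by (intro E_comp[OF ffy ffx]) blast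
    qed
  qed
qed

lemma hoeff_pos:
  fixes D :: "'a pmf"
  assumes fin: "finite (set_pmf D)" and l: "l > 0" and ab: "\<And>x. x \<in> set_pmf D \<Longrightarrow> f x \<in> {a..b}"
  shows "E D (\<lambda>x. exp (l * (f x - E D f))) \<le> exp (l\<^sup>2 * (b - a)\<^sup>2 / 8)"
proof -
  interpret interval_bounded_random_variable "measure_pmf D" f a b
  proof unfold_locales
    show "f \<in> borel_measurable (measure_pmf D)" by simp
    show "AE x in measure_pmf D. f x \<in> {a..b}" by (rule AE_pmfI) (rule ab)
  qed
  have "nn_integral (measure_pmf D) (\<lambda>x. ennreal (exp (l * (f x - E D f)))) \<le> ennreal (exp (l\<^sup>2 * (b - a)\<^sup>2 / 8))"
    using Hoeffdings_lemma_nn_integral[OF l] .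
  also have "nn_integral (measure_pmf D) (\<lambda>x. ennreal (exp (l * (f x - E D f)))) =
      ennreal (E D (\<lambda>x. exp (l * (f x - E D f))))"
    by (rule nn_integral_eq_integral[OF integrable_measure_pmf_finite[OF fin]]) simp
  finally show ?thesis by (simp add: ennreal_le_iff)
qed

lemma hoeff2:
  fixes D :: "nat pmf"
  assumes supp: "\<And>n. n \<in> set_pmf D \<Longrightarrow> n = m \<or> n = Suc m"
  shows "E D (\<lambda>n. exp (lam * real n)) \<le> exp (lam * E D real + lam\<^sup>2 / 8)"
proof -
  have fin: "finite (set_pmf D)"
  proof (rule finite_subset[of _ "{m, Suc m}"])
    show "set_pmf D \<subseteq> {m, Suc m}" using supp by blast
  qed simp
  define \<mu> where "\<mu> = E D real"
  have pw: "exp (lam * real n) = exp (lam * (real n - \<mu>)) * exp (lam * \<mu>)" for n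
  proof -
    have "exp (lam * (real n - \<mu>)) * exp (lam * \<mu>) = exp (lam * (real n - \<mu>) + lam * \<mu>)"
      by (rule exp_add[symmetric])
    also have "lam * (real n - \<mu>) + lam * \<mu> = lam * real n" by (simp add: algebra_simps)
    finally show ?thesis by simp
  qed
  have split: "E D (\<lambda>n. exp (lam * real n)) = E D (\<lambda>n. exp (lam * (real n - \<mu>))) * exp (lam * \<mu>)"
  proof -
    have "E D (\<lambda>n. exp (lam * real n)) = E D (\<lambda>n. exp (lam * (real n - \<mu>)) * exp (lam * \<mu>))"
      by (rule Bochner_Integration.integral_cong[OF refl pw])
    then show ?thesis by (simp only: integral_mult_left_zero)
  qed
  have goal: "E D (\<lambda>n. exp (lam * (real n - \<mu>))) \<le> exp (lam\<^sup>2 / 8)"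
  proof -
    consider "lam > 0" | "lam < 0" | "lam = 0" by linarith
    then show ?thesis
    proof cases
      case 1
      have "E D (\<lambda>n. exp (lam * (real n - E D real))) \<le> exp (lam\<^sup>2 * (real (Suc m) - real m)\<^sup>2 / 8)"
        by (rule hoeff_pos[OF fin 1]) (auto dest!: supp)
      then show ?thesis by (simp add: \<mu>_def)
    next
      case 2
      have "E D (\<lambda>n. exp ((-lam) * ((- real n) - E D (\<lambda>n. - real n)))) \<le>
          exp ((-lam)\<^sup>2 * ((- real m) - (- real (Suc m)))\<^sup>2 / 8)"
        by (rule hoeff_pos[OF fin]) (use 2 in \<open>auto dest!: supp\<close>)
      moreover have "(\<lambda>n. exp ((-lam) * ((- real n) - E D (\<lambda>n. - real n)))) = (\<lambda>n. exp (lam * (real n - \<mu>)))"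
        by (simp add: \<mu>_def algebra_simps)
      ultimately show ?thesis by simp
    next
      case 3
      then show ?thesis by simp
    qed
  qed
  have "E D (\<lambda>n. exp (lam * real n)) \<le> exp (lam\<^sup>2 / 8) * exp (lam * \<mu>)"
    unfolding split by (rule mult_right_mono[OF goal]) simp
  also have "\<dots> = exp (lam * \<mu> + lam\<^sup>2 / 8)" by (simp add: exp_add)
  finally show ?thesis by (simp add: \<mu>_def)
qed

lemma E_J:
  assumes "finite (set_pmf D)" "\<And>n. n \<in> set_pmf D \<Longrightarrow> finite (set_pmf (f n))"
  shows "E (D \<bind> (\<lambda>n. map_pmf (\<lambda>k. (k, n - k)) (f n))) u = E D (\<lambda>n. E (f n) (\<lambda>k. u (k, n - k)))"
proof -
  have "E (D \<bind> (\<lambda>n. map_pmf (\<lambda>k. (k, n - k)) (f n))) u = E D (\<lambda>n. E (map_pmf (\<lambda>k. (k, n - k)) (f n)) u)"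
    by (rule exp_bind[OF assms(1)]) (use assms(2) in simp)
  also have "\<dots> = E D (\<lambda>n. E (f n) (\<lambda>k. u (k, n - k)))"
    by (simp only: integral_map_pmf)
  finally show ?thesis .
qed

lemma ok_fin_D:
  assumes "\<And>n. n \<in> set_pmf D \<Longrightarrow> ok N p s n"
  shows "finite (set_pmf D)"
proof (rule finite_subset[of _ "{fl N p s, Suc (fl N p s)}"])
  show "set_pmf D \<subseteq> {fl N p s, Suc (fl N p s)}" using ok_range assms by fastforce
qed simp

lemma main:
  assumes fB: "finite B"
  shows "distinct (leaves s) \<Longrightarrow> (\<And>n. n \<in> set_pmf D \<Longrightarrow> ok N p s n) \<Longrightarrow>
    E D (G lam B s) \<le> exp (lam * E D (Mf B s) + lam\<^sup>2 / 8 * real (card (B \<inter> set (leaves s))))"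
proof (induction s arbitrary: D)
  case (Leaf j)
  have e1: "E D (G lam B (Leaf j)) = E D (\<lambda>n. exp (lam * (if j \<in> B then real n else 0)))"
    by (rule E_cong) (simp add: G_leaf[OF fB])
  have e2: "E D (Mf B (Leaf j)) = E D (\<lambda>n. if j \<in> B then real n else 0)"
    by (rule E_cong) (simp add: Mf_leaf[OF fB])
  show ?case
  proof (cases "j \<in> B")
    case True
    have c: "B \<inter> set (leaves (Leaf j)) = {j}" using True by auto
    have "E D (\<lambda>n. exp (lam * real n)) \<le> exp (lam * E D real + lam\<^sup>2 / 8)"
      by (rule hoeff2[where m = "fl N p (Leaf j)"]) (use Leaf.prems(2) in auto)
    then show ?thesis unfolding e1 e2 c using True by simp
  next
    case False
    have c: "B \<inter> set (leaves (Leaf j)) = {}" using False by auto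
    show ?thesis unfolding e1 e2 c using False by simp
  qed
next
  case (Node f l r)
  let ?s = "Node f l r"
  have okD: "\<And>n. n \<in> set_pmf D \<Longrightarrow> ok N p ?s n" by (rule Node.prems(2))
  have finD: "finite (set_pmf D)" by (rule ok_fin_D[OF okD])
  have ffn: "\<And>n. n \<in> set_pmf D \<Longrightarrow> finite (set_pmf (f n))" using ok_ff okD by blast
  define J where "J = D \<bind> (\<lambda>n. map_pmf (\<lambda>k. (k, n - k)) (f n))"
  have finJ: "finite (set_pmf J)"
    unfolding J_def by (rule fin_bind[OF finD]) (use ffn in simp)
  have sJ: "\<exists>n\<in>set_pmf D. a \<in> set_pmf (f n) \<and> b = n - a" if "(a,b) \<in> set_pmf J" for a b
    using that unfolding J_def by (auto simp: set_bind_pmf)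
  define Dl where "Dl = map_pmf fst J"
  define Dr where "Dr = map_pmf snd J"
  have okl: "ok N p l a" if "a \<in> set_pmf Dl" for a
  proof -
    from that have "a \<in> fst ` set_pmf J" by (simp add: Dl_def)
    then obtain q where q: "q \<in> set_pmf J" "a = fst q" by blast
    then have "(a, snd q) \<in> set_pmf J" by simp
    then obtain n where "n \<in> set_pmf D" "a \<in> set_pmf (f n)" using sJ by blast
    then show ?thesis using okD by auto
  qed
  have okr: "ok N p r b" if "b \<in> set_pmf Dr" for b
  proof -
    from that have "b \<in> snd ` set_pmf J" by (simp add: Dr_def)
    then obtain q where q: "q \<in> set_pmf J" "b = snd q" by blast
    then have "(fst q, b) \<in> set_pmf J" by simp
    then obtain n where "n \<in> set_pmf D" "fst q \<in> set_pmf (f n)" "b = n - fst q" using sJ by blast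
    then show ?thesis using okD by auto
  qed
  have dl: "distinct (leaves l)" and dr: "distinct (leaves r)" using Node.prems(1) by auto
  have IHl: "E Dl (G lam B l) \<le> exp (lam * E Dl (Mf B l) + lam\<^sup>2 / 8 * real (card (B \<inter> set (leaves l))))"
    by (rule Node.IH(1)[OF dl okl])
  have IHr: "E Dr (G lam B r) \<le> exp (lam * E Dr (Mf B r) + lam\<^sup>2 / 8 * real (card (B \<inter> set (leaves r))))"
    by (rule Node.IH(2)[OF dr okr])
  have "E D (G lam B ?s) = E D (\<lambda>n. E (f n) (\<lambda>k. G lam B l k * G lam B r (n - k)))"
    by (rule E_cong) (rule G_node[OF okD])
  also have "\<dots> = E J (\<lambda>q. G lam B l (fst q) * G lam B r (snd q))"
    using E_J[OF finD ffn, where u="\<lambda>q. G lam B l (fst q) * G lam B r (snd q)"] unfolding J_def by simp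
  also have "\<dots> \<le> E J (\<lambda>q. G lam B l (fst q)) * E J (\<lambda>q. G lam B r (snd q))"
  proof (rule cov4[of J "fl N p l" "fl N p r" "fl N p ?s"])
    fix a b assume ab: "(a, b) \<in> set_pmf J"
    then obtain n where n: "n \<in> set_pmf D" "a \<in> set_pmf (f n)" "b = n - a" using sJ by blast
    have o: "ok N p ?s n" using okD n(1) .
    then have "a \<le> n" "ok N p l a" "ok N p r (n - a)" using n by auto
    then show "(a = fl N p l \<or> a = Suc (fl N p l)) \<and> (b = fl N p r \<or> b = Suc (fl N p r)) \<and>
       (a + b = fl N p ?s \<or> a + b = Suc (fl N p ?s))"
      using ok_range[OF o] ok_range[of N p l a] ok_range[of N p r "n - a"] n(3) by auto
  next
    assume h1: "(Suc (fl N p l), fl N p r) \<in> set_pmf J" and h2: "(fl N p l, Suc (fl N p r)) \<in> set_pmf J"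
    have o1: "ok N p l (Suc (fl N p l))" "ok N p r (fl N p r)"
      using okl okr h1 unfolding Dl_def Dr_def by (force+)
    have o2: "ok N p l (fl N p l)" "ok N p r (Suc (fl N p r))"
      using okl okr h2 unfolding Dl_def Dr_def by (force+)
    have ml: "(0 \<le> lam \<longrightarrow> G lam B l (fl N p l) \<le> G lam B l (Suc (fl N p l))) \<and>
              (lam \<le> 0 \<longrightarrow> G lam B l (Suc (fl N p l)) \<le> G lam B l (fl N p l))"
      by (rule G_mono[OF fB o2(1) o1(1)]) simp
    have mr: "(0 \<le> lam \<longrightarrow> G lam B r (fl N p r) \<le> G lam B r (Suc (fl N p r))) \<and>
              (lam \<le> 0 \<longrightarrow> G lam B r (Suc (fl N p r)) \<le> G lam B r (fl N p r))"
      by (rule G_mono[OF fB o1(2) o2(2)]) simp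
    show "0 \<le> (G lam B l (Suc (fl N p l)) - G lam B l (fl N p l)) * (G lam B r (Suc (fl N p r)) - G lam B r (fl N p r))"
    proof (cases "0 \<le> lam")
      case True
      then show ?thesis using ml mr by (intro mult_nonneg_nonneg) auto
    next
      case False
      then show ?thesis using ml mr by (intro mult_nonpos_nonpos) auto
    qed
  qed
  also have "E J (\<lambda>q. G lam B l (fst q)) = E Dl (G lam B l)" unfolding Dl_def by simp
  also have "E J (\<lambda>q. G lam B r (snd q)) = E Dr (G lam B r)" unfolding Dr_def by simp
  also have "E Dl (G lam B l) * E Dr (G lam B r) \<le>
     exp (lam * E Dl (Mf B l) + lam\<^sup>2 / 8 * real (card (B \<inter> set (leaves l)))) *
     exp (lam * E Dr (Mf B r) + lam\<^sup>2 / 8 * real (card (B \<inter> set (leaves r))))"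
    by (rule mult_mono[OF IHl IHr]) (auto intro!: integral_nonneg_AE G_nonneg)
  also have "\<dots> = exp (lam * (E Dl (Mf B l) + E Dr (Mf B r)) +
       lam\<^sup>2 / 8 * (real (card (B \<inter> set (leaves l))) + real (card (B \<inter> set (leaves r)))))"
    by (simp add: exp_add[symmetric] algebra_simps)
  also have "E Dl (Mf B l) + E Dr (Mf B r) = E D (Mf B ?s)"
  proof -
    have "E D (Mf B ?s) = E D (\<lambda>n. E (f n) (\<lambda>k. Mf B l k + Mf B r (n - k)))"
      by (rule E_cong) (rule Mf_node[OF okD])
    also have "\<dots> = E J (\<lambda>q. Mf B l (fst q) + Mf B r (snd q))"
      using E_J[OF finD ffn, where u="\<lambda>q. Mf B l (fst q) + Mf B r (snd q)"] unfolding J_def by simp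
    also have "\<dots> = E J (\<lambda>q. Mf B l (fst q)) + E J (\<lambda>q. Mf B r (snd q))"
      by (rule Bochner_Integration.integral_add[OF integrable_measure_pmf_finite[OF finJ]
          integrable_measure_pmf_finite[OF finJ]])
    also have "\<dots> = E Dl (Mf B l) + E Dr (Mf B r)" unfolding Dl_def Dr_def by simp
    finally show ?thesis by simp
  qed
  also have "real (card (B \<inter> set (leaves l))) + real (card (B \<inter> set (leaves r))) =
      real (card (B \<inter> set (leaves ?s)))"
  proof -
    have "B \<inter> set (leaves ?s) = (B \<inter> set (leaves l)) \<union> (B \<inter> set (leaves r))" by auto
    moreover have "(B \<inter> set (leaves l)) \<inter> (B \<inter> set (leaves r)) = {}" using Node.prems(1) by auto
    ultimately have "card (B \<inter> set (leaves ?s)) = card (B \<inter> set (leaves l)) + card (B \<inter> set (leaves r))"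
      by (simp add: card_Un_disjoint)
    then show ?thesis by simp
  qed
  finally show ?case .
qed

lemma tail:
  fixes P :: "'a pmf" and W :: "'a \<Rightarrow> real"
  assumes finP: "finite (set_pmf P)"
    and mgf: "\<And>lam. E P (\<lambda>x. exp (lam * W x)) \<le> exp (lam\<^sup>2 * c / 8)"
    and c: "c > 0" and eps: "\<epsilon> > 0"
  shows "measure_pmf.prob P {x. W x \<ge> \<epsilon>} \<le> exp (- 2 * \<epsilon>\<^sup>2 / c)"
proof -
  define lam where "lam = 4 * \<epsilon> / c"
  have lam: "lam > 0" using c eps by (simp add: lam_def)
  have "{x. W x \<ge> \<epsilon>} = {x \<in> space (measure_pmf P). exp (lam * W x) \<ge> exp (lam * \<epsilon>)}"
    using lam by auto
  then have "measure_pmf.prob P {x. W x \<ge> \<epsilon>} = measure_pmf.prob P {x \<in> space (measure_pmf P). exp (lam * W x) \<ge> exp (lam * \<epsilon>)}"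
    by simp
  also have "\<dots> \<le> E P (\<lambda>x. exp (lam * W x)) / exp (lam * \<epsilon>)"
    by (rule integral_Markov_inequality_measure[where A = UNIV])
       (auto intro: integrable_measure_pmf_finite[OF finP])
  also have "\<dots> \<le> exp (lam\<^sup>2 * c / 8) / exp (lam * \<epsilon>)"
    by (rule divide_right_mono[OF mgf]) simp
  also have "\<dots> = exp (lam\<^sup>2 * c / 8 - lam * \<epsilon>)" by (simp add: exp_diff)
  also have "lam\<^sup>2 * c / 8 - lam * \<epsilon> = - 2 * \<epsilon>\<^sup>2 / c"
    using c by (simp add: lam_def field_simps power2_eq_square)
  finally show ?thesis .
qed

lemma leaves_ne: "leaves s \<noteq> []"
  by (induction s) auto

theorem lemma5:
  fixes t :: rtree and R N :: nat and p :: "nat \<Rightarrow> real"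
  assumes distinct: "distinct (leaves t)"
    and labels: "set (leaves t) = {1..R}"
    and p_nonneg: "\<forall>j\<in>{1..R}. p j \<ge> 0"
    and p_sum: "(\<Sum>j=1..R. p j) = 1"
    and splits: "\<forall>f l r n. Node f l r \<in> subtrees t \<longrightarrow>
        n \<in> {nat \<lfloor>mu N p (Node f l r)\<rfloor>, nat \<lfloor>mu N p (Node f l r)\<rfloor> + 1} \<longrightarrow>
        card (set_pmf (f n)) \<le> 2 \<and> (\<forall>k\<in>set_pmf (f n). k \<le> n)"
    and counts: "\<forall>s\<in>subtrees t.
        (\<forall>Nv\<in>set_pmf (resample t N).
           (\<Sum>j\<in>set (leaves s). Nv j) \<in> {nat \<lfloor>mu N p s\<rfloor>, nat \<lfloor>mu N p s\<rfloor> + 1}) \<and>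
        measure_pmf.expectation (resample t N) (\<lambda>Nv. real (\<Sum>j\<in>set (leaves s). Nv j))
          = mu N p s"
  shows "\<forall>\<epsilon>>0. \<forall>A\<subseteq>{1..R}.
    measure_pmf.prob (resample t N)
      {Nv. \<bar>\<Sum>j\<in>A. (real (Nv j) - real N * p j)\<bar> \<ge> \<epsilon>}
    \<le> 2 * exp (- 4 * \<epsilon>\<^sup>2 / real R)"
proof (intro allI impI)
  fix \<epsilon> :: real and A :: "nat set"
  assume eps: "\<epsilon> > 0" and AR: "A \<subseteq> {1..R}"
  define P where "P = resample t N"
  define L where "L = set (leaves t)"
  have L: "L = {1..R}" using labels by (simp add: L_def)
  have finL: "finite L" by (simp add: L_def)
  have psumL: "(\<Sum>j\<in>L. p j) = 1" using p_sum L by simp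
  have mut: "mu N p t = real N" by (simp add: mu_def psumL flip: L_def)
  have flt: "fl N p t = N" by (simp add: fl_def mut)
  have tt: "t \<in> subtrees t" by (rule self_subtrees)
  have root_rng: "\<forall>Nv\<in>set_pmf P. (\<Sum>j\<in>L. Nv j) = N \<or> (\<Sum>j\<in>L. Nv j) = N + 1"
  proof -
    have "\<forall>Nv\<in>set_pmf (resample t N). (\<Sum>j\<in>set (leaves t). Nv j) \<in> {nat \<lfloor>mu N p t\<rfloor>, nat \<lfloor>mu N p t\<rfloor> + 1}"
      using bspec[OF counts tt] by blast
    moreover have "nat \<lfloor>mu N p t\<rfloor> = N" using flt by (simp add: fl_def)
    ultimately show ?thesis by (simp add: P_def L_def)
  qed
  have root_E: "E P (\<lambda>Nv. real (\<Sum>j\<in>L. Nv j)) = real N"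
    using counts tt mut by (auto simp: P_def L_def)
  have exact: "\<forall>Nv\<in>set_pmf P. (\<Sum>j\<in>L. Nv j) = N"
  proof -
    let ?g = "\<lambda>Nv. real (\<Sum>j\<in>L. Nv j) - real N"
    have int1: "integrable (measure_pmf P) (\<lambda>Nv. real (\<Sum>j\<in>L. Nv j))"
    proof (rule measure_pmf.integrable_const_bound[where B = "real N + 1"])
      show "AE x in measure_pmf P. norm (real (\<Sum>j\<in>L. x j)) \<le> real N + 1"
      proof (rule AE_pmfI)
        fix y assume "y \<in> set_pmf P"
        then have "(\<Sum>j\<in>L. y j) \<le> N + 1" using root_rng by force
        then show "norm (real (\<Sum>j\<in>L. y j)) \<le> real N + 1" by (simp del: of_nat_sum)
      qed
    qed simp
    have int: "integrable (measure_pmf P) ?g" using int1 by simp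
    have "E P ?g = 0" using root_E int1 by (simp add: Bochner_Integration.integral_diff)
    moreover have "AE x in measure_pmf P. 0 \<le> ?g x"
    proof (rule AE_pmfI)
      fix y assume "y \<in> set_pmf P"
      then have "N \<le> (\<Sum>j\<in>L. y j)" using root_rng by force
      then show "0 \<le> ?g y" by (simp del: of_nat_sum)
    qed
    ultimately have "AE x in measure_pmf P. ?g x = 0"
      using integral_nonneg_eq_0_iff_AE[OF int] by simp
    then show ?thesis by (simp add: AE_measure_pmf_iff del: of_nat_sum)
  qed
  have okt: "ok N p t N"
  proof (rule derive_ok[OF distinct])
    show "\<forall>Nv\<in>set_pmf (resample t N). (\<Sum>j\<in>set (leaves t). Nv j) = N"
      using exact by (simp add: P_def L_def)
    show "\<forall>Nv\<in>set_pmf (resample t N). \<forall>s'\<in>subtrees t.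
           (\<Sum>j\<in>set (leaves s'). Nv j) = fl N p s' \<or> (\<Sum>j\<in>set (leaves s'). Nv j) = fl N p s' + 1"
      using counts by (auto simp: fl_def)
  qed
  have finP: "finite (set_pmf P)" using fin[OF okt] by (simp add: P_def)
  have leafE: "E P (\<lambda>Nv. real (Nv j)) = real N * p j" if "j \<in> L" for j
  proof -
    have "Leaf j \<in> subtrees t" using leaf_subtrees that by (simp add: L_def)
    then have "E P (\<lambda>Nv. real (\<Sum>i\<in>set (leaves (Leaf j)). Nv i)) = mu N p (Leaf j)"
      using bspec[OF counts] unfolding P_def by blast
    then show ?thesis by (simp add: mu_def)
  qed
  have mgf: "E P (\<lambda>Nv. exp (lam * (\<Sum>j\<in>B. (real (Nv j) - real N * p j)))) \<le> exp (lam\<^sup>2 * real (card B) / 8)"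
    if BL: "B \<subseteq> L" for B lam
  proof -
    have fB: "finite B" using BL finL finite_subset by blast
    define S where "S = (\<Sum>j\<in>B. real N * p j)"
    have M: "Mf B t N = S"
    proof -
      have "Mf B t N = (\<Sum>j\<in>B. E P (\<lambda>Nv. real (Nv j)))"
        unfolding Mf_def P_def[symmetric]
        by (rule Bochner_Integration.integral_sum) (rule integrable_measure_pmf_finite[OF finP])
      also have "\<dots> = S" unfolding S_def using BL leafE by (intro sum.cong) auto
      finally show ?thesis .
    qed
    have cardB: "card (B \<inter> set (leaves t)) = card B" using BL by (simp add: L_def Int_absorb2)
    have "E (return_pmf N) (G lam B t) \<le>
        exp (lam * E (return_pmf N) (Mf B t) + lam\<^sup>2 / 8 * real (card (B \<inter> set (leaves t))))"
      by (rule main[OF fB distinct]) (use okt in simp)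
    then have Gb: "G lam B t N \<le> exp (lam * S + lam\<^sup>2 / 8 * real (card B))"
      by (simp add: M cardB)
    have "E P (\<lambda>Nv. exp (lam * (\<Sum>j\<in>B. (real (Nv j) - real N * p j)))) =
        E P (\<lambda>Nv. exp (lam * (\<Sum>j\<in>B. real (Nv j))) * exp (- lam * S))"
    proof (rule E_cong)
      fix Nv
      have "lam * (\<Sum>j\<in>B. (real (Nv j) - real N * p j)) = lam * (\<Sum>j\<in>B. real (Nv j)) + (- lam * S)"
        by (simp add: S_def sum_subtractf algebra_simps)
      then show "exp (lam * (\<Sum>j\<in>B. (real (Nv j) - real N * p j))) =
          exp (lam * (\<Sum>j\<in>B. real (Nv j))) * exp (- lam * S)"
        by (simp only: exp_add)
    qed
    also have "\<dots> = G lam B t N * exp (- lam * S)"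
      by (simp add: G_def P_def)
    also have "\<dots> \<le> exp (lam * S + lam\<^sup>2 / 8 * real (card B)) * exp (- lam * S)"
      by (rule mult_right_mono[OF Gb]) simp
    also have "\<dots> = exp (lam\<^sup>2 * real (card B) / 8)"
      by (simp add: exp_add[symmetric])
    finally show ?thesis .
  qed
  \<comment> \<open>choose the smaller side\<close>
  define X where "X = (\<lambda>Nv. \<Sum>j\<in>A. (real (Nv j) - real N * p j))"
  have zero: "(\<Sum>j\<in>L. (real (Nv j) - real N * p j)) = 0" if "Nv \<in> set_pmf P" for Nv
  proof -
    have "(\<Sum>j\<in>L. (real (Nv j) - real N * p j)) = real (\<Sum>j\<in>L. Nv j) - real N * (\<Sum>j\<in>L. p j)"
      by (simp add: sum_subtractf sum_distrib_left)
    also have "\<dots> = 0" using exact that psumL by simp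
    finally show ?thesis .
  qed
  have AL: "A \<subseteq> L" using AR L by simp
  obtain B where BL: "B \<subseteq> L" and cB: "2 * card B \<le> R"
    and XB: "\<forall>Nv\<in>set_pmf P. \<bar>X Nv\<bar> = \<bar>\<Sum>j\<in>B. (real (Nv j) - real N * p j)\<bar>"
  proof (cases "2 * card A \<le> R")
    case True
    then show ?thesis using that[of A] AL by (simp add: X_def)
  next
    case False
    have cL: "card L = R" using L by simp
    have cD: "card (L - A) = R - card A" using AL finL cL by (simp add: card_Diff_subset finite_subset)
    have "\<bar>X Nv\<bar> = \<bar>\<Sum>j\<in>L - A. (real (Nv j) - real N * p j)\<bar>" if "Nv \<in> set_pmf P" for Nv
    proof -
      have "(\<Sum>j\<in>L. (real (Nv j) - real N * p j)) =
          (\<Sum>j\<in>L - A. (real (Nv j) - real N * p j)) + X Nv"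
        unfolding X_def using AL finL by (simp add: sum.subset_diff)
      then show ?thesis using zero[OF that] by linarith
    qed
    then show ?thesis using that[of "L - A"] False cD by auto
  qed
  define Y where "Y = (\<lambda>Nv. \<Sum>j\<in>B. (real (Nv j) - real N * p j))"
  have R0: "real R > 0"
  proof -
    have "L \<noteq> {}" unfolding L_def using leaves_ne[of t] by simp
    then show ?thesis using L by auto
  qed
  have "measure_pmf.prob P {Nv. \<bar>X Nv\<bar> \<ge> \<epsilon>} = measure_pmf.prob P ({Nv. \<bar>X Nv\<bar> \<ge> \<epsilon>} \<inter> set_pmf P)"
    by (simp add: measure_Int_set_pmf)
  also have "\<dots> \<le> measure_pmf.prob P ({Nv. Y Nv \<ge> \<epsilon>} \<union> {Nv. - Y Nv \<ge> \<epsilon>})"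
  proof (rule measure_pmf.finite_measure_mono)
    show "{Nv. \<epsilon> \<le> \<bar>X Nv\<bar>} \<inter> set_pmf P \<subseteq> {Nv. \<epsilon> \<le> Y Nv} \<union> {Nv. \<epsilon> \<le> - Y Nv}"
    proof
      fix x assume x: "x \<in> {Nv. \<epsilon> \<le> \<bar>X Nv\<bar>} \<inter> set_pmf P"
      then have "\<epsilon> \<le> \<bar>Y x\<bar>" using XB unfolding Y_def by auto
      then have "\<epsilon> \<le> Y x \<or> \<epsilon> \<le> - Y x" by linarith
      then show "x \<in> {Nv. \<epsilon> \<le> Y Nv} \<union> {Nv. \<epsilon> \<le> - Y Nv}" by blast
    qed
  qed simp
  also have "\<dots> \<le> measure_pmf.prob P {Nv. Y Nv \<ge> \<epsilon>} + measure_pmf.prob P {Nv. - Y Nv \<ge> \<epsilon>}"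
    by (rule measure_Un_le) simp_all
  also have "\<dots> \<le> 2 * exp (- 4 * \<epsilon>\<^sup>2 / real R)"
  proof (cases "B = {}")
    case True
    then have "{Nv. Y Nv \<ge> \<epsilon>} = {}" "{Nv. - Y Nv \<ge> \<epsilon>} = {}" using eps by (auto simp: Y_def)
    then show ?thesis by simp
  next
    case False
    have fB: "finite B" using BL finL finite_subset by blast
    have c0: "real (card B) > 0" using False fB by (simp add: card_gt_0_iff)
    have t1: "measure_pmf.prob P {Nv. Y Nv \<ge> \<epsilon>} \<le> exp (- 2 * \<epsilon>\<^sup>2 / real (card B))"
      by (rule tail[OF finP _ c0 eps]) (unfold Y_def, rule mgf[OF BL])
    have t2: "measure_pmf.prob P {Nv. - Y Nv \<ge> \<epsilon>} \<le> exp (- 2 * \<epsilon>\<^sup>2 / real (card B))"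
    proof (rule tail[OF finP _ c0 eps])
      fix lam
      have "E P (\<lambda>x. exp (lam * - Y x)) = E P (\<lambda>x. exp ((- lam) * Y x))" by simp
      also have "\<dots> \<le> exp ((- lam)\<^sup>2 * real (card B) / 8)" unfolding Y_def by (rule mgf[OF BL])
      finally show "E P (\<lambda>x. exp (lam * - Y x)) \<le> exp (lam\<^sup>2 * real (card B) / 8)" by simp
    qed
    have "- 2 * \<epsilon>\<^sup>2 / real (card B) \<le> - 4 * \<epsilon>\<^sup>2 / real R"
    proof -
      have cBr: "2 * real (card B) \<le> real R" using cB by linarith
      have "4 * \<epsilon>\<^sup>2 / real R \<le> 4 * \<epsilon>\<^sup>2 / (2 * real (card B))"
        by (rule divide_left_mono[OF cBr]) (use c0 R0 in auto)
      also have "\<dots> = 2 * \<epsilon>\<^sup>2 / real (card B)" by simp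
      finally have "4 * \<epsilon>\<^sup>2 / real R \<le> 2 * \<epsilon>\<^sup>2 / real (card B)" .
      then show ?thesis by simp
    qed
    then have ex: "exp (- 2 * \<epsilon>\<^sup>2 / real (card B)) \<le> exp (- 4 * \<epsilon>\<^sup>2 / real R)"
      by (simp only: exp_le_cancel_iff)
    show ?thesis using t1 t2 ex by linarith
  qed
  finally show "measure_pmf.prob (resample t N)
      {Nv. \<bar>\<Sum>j\<in>A. (real (Nv j) - real N * p j)\<bar> \<ge> \<epsilon>} \<le> 2 * exp (- 4 * \<epsilon>\<^sup>2 / real R)"
    by (simp add: X_def P_def)
qed

end
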